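(* Let $\{e_k\}_{k=1}^\infty$ be the canonical orthonormal basis of the real Hilbert space $\ell_2$, and let $\mathcal{X}=\{x_k\}_{k=1}^\infty\subset\ell_2$ satisfy \[ \sum_{k=1}^\infty\|e_k-x_k\|^2\le\frac18.\] Then $\mathcal{X}$ is not injective.
   Context: A family $\{x_k\}$ in $\ell_2$ is called injective if whenever a Hilbert–Schmidt self-adjoint operator $T$ on $\ell_2$ satisfies $\langle Tx_k,x_k\rangle=0$ for all $k$, then $T=0$. *)

theory Defs
  imports "HOL-Analysis.Analysis"
begin

text \<open>The real Hilbert space l2 is modelled as the square-summable
  sequences nat => real (index 0 plays the role of index 1).\<close>

definition ell2 :: "(nat \<Rightarrow> real) \<Rightarrow> bool" where
  "ell2 x \<longleftrightarrow> summable (\<lambda>k. (x k)\<^sup>2)"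

definition ell2_inner :: "(nat \<Rightarrow> real) \<Rightarrow> (nat \<Rightarrow> real) \<Rightarrow> real" where
  "ell2_inner x y = (\<Sum>k. x k * y k)"

definition ell2_norm :: "(nat \<Rightarrow> real) \<Rightarrow> real" where
  "ell2_norm x = sqrt (\<Sum>k. (x k)\<^sup>2)"

definition canon_basis :: "nat \<Rightarrow> (nat \<Rightarrow> real)" where
  "canon_basis k = (\<lambda>j. if j = k then 1 else 0)"

text \<open>Bounded linear operator on l2 (only its values on l2 matter).\<close>
definition ell2_bounded_linear :: "((nat \<Rightarrow> real) \<Rightarrow> (nat \<Rightarrow> real)) \<Rightarrow> bool" where
  "ell2_bounded_linear T \<longleftrightarrow>
     (\<forall>x. ell2 x \<longrightarrow> ell2 (T x)) \<and>
     (\<forall>x y a b. ell2 x \<longrightarrow> ell2 y \<longrightarrow>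
        T (\<lambda>k. a * x k + b * y k) = (\<lambda>k. a * T x k + b * T y k)) \<and>
     (\<exists>C. \<forall>x. ell2 x \<longrightarrow> ell2_norm (T x) \<le> C * ell2_norm x)"

definition ell2_selfadjoint :: "((nat \<Rightarrow> real) \<Rightarrow> (nat \<Rightarrow> real)) \<Rightarrow> bool" where
  "ell2_selfadjoint T \<longleftrightarrow>
     (\<forall>x y. ell2 x \<longrightarrow> ell2 y \<longrightarrow> ell2_inner (T x) y = ell2_inner x (T y))"

text \<open>Hilbert--Schmidt: the sum of the squared norms of the images of an
  orthonormal basis is finite (basis independent).\<close>
definition ell2_hilbert_schmidt :: "((nat \<Rightarrow> real) \<Rightarrow> (nat \<Rightarrow> real)) \<Rightarrow> bool" where
  "ell2_hilbert_schmidt T \<longleftrightarrow> summable (\<lambda>k. (ell2_norm (T (canon_basis k)))\<^sup>2)"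

definition HS_selfadjoint :: "((nat \<Rightarrow> real) \<Rightarrow> (nat \<Rightarrow> real)) \<Rightarrow> bool" where
  "HS_selfadjoint T \<longleftrightarrow> ell2_bounded_linear T \<and> ell2_selfadjoint T \<and> ell2_hilbert_schmidt T"

definition injective_family :: "(nat \<Rightarrow> (nat \<Rightarrow> real)) \<Rightarrow> bool" where
  "injective_family X \<longleftrightarrow>
     (\<forall>T. HS_selfadjoint T \<longrightarrow> (\<forall>k. ell2_inner (T (X k)) (X k) = 0) \<longrightarrow>
          (\<forall>v. ell2 v \<longrightarrow> T v = (\<lambda>_. 0)))"

end

theory Submission
  imports Defs
begin



lemma ell2_abs_prod_summable:
  assumes "ell2 x" "ell2 y" shows "summable (\<lambda>k. \<bar>x k * y k\<bar>)"
proof (rule summable_comparison_test'[where g="\<lambda>k. (x k)\<^sup>2 + (y k)\<^sup>2" and N=0])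
  show "summable (\<lambda>k. (x k)\<^sup>2 + (y k)\<^sup>2)" using assms unfolding ell2_def by (rule summable_add)
  fix n
  have e: "(\<bar>x n\<bar> - \<bar>y n\<bar>)\<^sup>2 = (x n)\<^sup>2 + (y n)\<^sup>2 - 2*(\<bar>x n\<bar>*\<bar>y n\<bar>)"
    by (simp add: power2_diff)
  have "0 \<le> (\<bar>x n\<bar> - \<bar>y n\<bar>)\<^sup>2" by simp
  moreover have "0 \<le> \<bar>x n\<bar>*\<bar>y n\<bar>" by simp
  ultimately have "\<bar>x n\<bar>*\<bar>y n\<bar> \<le> (x n)\<^sup>2 + (y n)\<^sup>2"
    unfolding e by linarith
  then show "norm \<bar>x n * y n\<bar> \<le> (x n)\<^sup>2 + (y n)\<^sup>2" by (simp add: abs_mult)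
qed

lemma ell2_prod_summable:
  assumes "ell2 x" "ell2 y" shows "summable (\<lambda>k. x k * y k)"
  by (rule summable_rabs_cancel[OF ell2_abs_prod_summable[OF assms]])

lemma ell2_lin:
  assumes "ell2 x" "ell2 y" shows "ell2 (\<lambda>k. a * x k + b * y k)"
  unfolding ell2_def
proof (rule summable_comparison_test'[where g="\<lambda>k. 2*a\<^sup>2*(x k)\<^sup>2 + 2*b\<^sup>2*(y k)\<^sup>2" and N=0])
  show "summable (\<lambda>k. 2*a\<^sup>2*(x k)\<^sup>2 + 2*b\<^sup>2*(y k)\<^sup>2)" using assms unfolding ell2_def
    by (intro summable_add summable_mult)
  fix n
  have e: "(a * x n + b * y n)\<^sup>2 + (a * x n - b * y n)\<^sup>2 = 2*a\<^sup>2*(x n)\<^sup>2 + 2*b\<^sup>2*(y n)\<^sup>2"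
    by (simp add: power2_eq_square algebra_simps)
  have "0 \<le> (a * x n - b * y n)\<^sup>2" by simp
  then have "(a * x n + b * y n)\<^sup>2 \<le> 2*a\<^sup>2*(x n)\<^sup>2 + 2*b\<^sup>2*(y n)\<^sup>2"
    using e by linarith
  then show "norm ((a * x n + b * y n)\<^sup>2) \<le> 2*a\<^sup>2*(x n)\<^sup>2 + 2*b\<^sup>2*(y n)\<^sup>2" by simp
qed

lemma ell2_sq_nonneg: "ell2 x \<Longrightarrow> 0 \<le> (\<Sum>k. (x k)\<^sup>2)"
  unfolding ell2_def by (rule suminf_nonneg) auto

lemma ell2_CS:
  assumes "ell2 x" "ell2 y"
  shows "(\<Sum>k. x k * y k)\<^sup>2 \<le> (\<Sum>k. (x k)\<^sup>2) * (\<Sum>k. (y k)\<^sup>2)"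
proof -
  have L: "(\<lambda>N. (\<Sum>k<N. x k * y k)\<^sup>2) \<longlonglongrightarrow> (\<Sum>k. x k * y k)\<^sup>2"
    by (intro tendsto_power summable_LIMSEQ ell2_prod_summable assms)
  show ?thesis
  proof (rule LIMSEQ_le_const2[OF L], intro exI allI impI)
    fix N :: nat
    have "(\<Sum>k<N. x k * y k)\<^sup>2 \<le> (\<Sum>k<N. (x k)\<^sup>2) * (\<Sum>k<N. (y k)\<^sup>2)"
      by (rule Cauchy_Schwarz_ineq_sum)
    also have "\<dots> \<le> (\<Sum>k. (x k)\<^sup>2) * (\<Sum>k. (y k)\<^sup>2)"
      using assms unfolding ell2_def
      by (intro mult_mono sum_le_suminf sum_nonneg suminf_nonneg) auto
    finally show "(\<Sum>k<N. x k * y k)\<^sup>2 \<le> (\<Sum>k. (x k)\<^sup>2) * (\<Sum>k. (y k)\<^sup>2)" .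
  qed
qed

lemma inner_lin_right:
  assumes "ell2 u" "ell2 x" "ell2 y"
  shows "ell2_inner u (\<lambda>k. a * x k + b * y k) = a * ell2_inner u x + b * ell2_inner u y"
proof -
  have "(\<Sum>k. u k * (a * x k + b * y k)) = (\<Sum>k. a * (u k * x k) + b * (u k * y k))"
    by (simp add: algebra_simps)
  also have "\<dots> = (\<Sum>k. a * (u k * x k)) + (\<Sum>k. b * (u k * y k))"
    using assms by (intro suminf_add[symmetric] summable_mult ell2_prod_summable)
  also have "\<dots> = a * (\<Sum>k. u k * x k) + b * (\<Sum>k. u k * y k)"
    using assms by (simp add: suminf_mult ell2_prod_summable)
  finally show ?thesis unfolding ell2_inner_def .
qed

lemma inner_commute: "ell2_inner x y = ell2_inner y x"
  unfolding ell2_inner_def by (simp add: mult.commute)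

lemma inner_basis: "ell2_inner u (canon_basis k) = u k"
  unfolding ell2_inner_def canon_basis_def
  by (subst suminf_finite[of "{k}"]) auto

lemma ell2_basis: "ell2 (canon_basis k)"
  unfolding ell2_def canon_basis_def
  by (rule summable_finite[of "{k}"]) auto

lemma ell2_norm_sq: "ell2 x \<Longrightarrow> (ell2_norm x)\<^sup>2 = (\<Sum>k. (x k)\<^sup>2)"
  unfolding ell2_norm_def using ell2_sq_nonneg by simp

lemma infsum_nat_eq:
  fixes h :: "nat \<Rightarrow> real"
  assumes "summable (\<lambda>n. \<bar>h n\<bar>)" shows "infsum h UNIV = suminf h"
proof -
  have "summable h" by (rule summable_rabs_cancel[OF assms])
  then have "(h has_sum suminf h) UNIV"
    using assms by (intro norm_summable_imp_has_sum) (auto simp: summable_sums)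
  then show ?thesis by (simp add: infsumI)
qed

lemma double_swap:
  fixes f :: "nat \<Rightarrow> nat \<Rightarrow> real"
  assumes inn: "\<And>n. summable (\<lambda>j. \<bar>f n j\<bar>)" and out: "summable (\<lambda>n. \<Sum>j. \<bar>f n j\<bar>)"
  shows "\<And>j. summable (\<lambda>n. \<bar>f n j\<bar>)"
    and "summable (\<lambda>j. \<Sum>n. \<bar>f n j\<bar>)"
    and "(\<Sum>j. \<Sum>n. f n j) = (\<Sum>n. \<Sum>j. f n j)"
proof -
  show cj: "summable (\<lambda>n. \<bar>f n j\<bar>)" for j
  proof (rule summable_comparison_test'[OF out, where N=0])
    fix n
    have "sum (\<lambda>j. \<bar>f n j\<bar>) {j} \<le> (\<Sum>j. \<bar>f n j\<bar>)"
      by (rule sum_le_suminf[OF inn]) auto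
    then show "norm \<bar>f n j\<bar> \<le> (\<Sum>j. \<bar>f n j\<bar>)" by simp
  qed
  show sj: "summable (\<lambda>j. \<Sum>n. \<bar>f n j\<bar>)"
  proof (rule summableI_nonneg_bounded[where x="\<Sum>n. \<Sum>j. \<bar>f n j\<bar>"])
    show "0 \<le> (\<Sum>n. \<bar>f n j\<bar>)" for j by (rule suminf_nonneg[OF cj]) auto
    fix J
    have "(\<Sum>j<J. \<Sum>n. \<bar>f n j\<bar>) = (\<Sum>n. \<Sum>j<J. \<bar>f n j\<bar>)"
      using cj by (rule suminf_sum[symmetric])
    also have "\<dots> \<le> (\<Sum>n. \<Sum>j. \<bar>f n j\<bar>)"
    proof (rule suminf_le)
      show "summable (\<lambda>n. \<Sum>j<J. \<bar>f n j\<bar>)" using cj by (rule summable_sum)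
      show "(\<Sum>j<J. \<bar>f n j\<bar>) \<le> (\<Sum>j. \<bar>f n j\<bar>)" for n
        by (rule sum_le_suminf[OF inn]) auto
    qed (rule out)
    finally show "(\<Sum>j<J. \<Sum>n. \<bar>f n j\<bar>) \<le> (\<Sum>n. \<Sum>j. \<bar>f n j\<bar>)" .
  qed
  have hs: "((\<lambda>j. \<bar>f n j\<bar>) has_sum (\<Sum>j. \<bar>f n j\<bar>)) UNIV" for n
    using inn[of n] by (intro norm_summable_imp_has_sum) (auto simp: summable_sums)
  have gs: "(\<lambda>n. \<Sum>j. \<bar>f n j\<bar>) summable_on UNIV"
    using out by (subst summable_on_UNIV_nonneg_real_iff) (auto intro: suminf_nonneg inn)
  have "(\<lambda>(n,j). \<bar>f n j\<bar>) summable_on (Sigma UNIV (\<lambda>_. UNIV))"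
    by (rule summable_on_SigmaI[OF _ gs]) (use hs in auto)
  then have "(\<lambda>p. norm ((\<lambda>(n,j). f n j) p)) summable_on UNIV \<times> UNIV"
    by (simp add: case_prod_unfold)
  then have F: "(\<lambda>(n,j). f n j) summable_on UNIV \<times> UNIV"
    using summable_on_iff_abs_summable_on_real by blast
  have "infsum (\<lambda>n. infsum (\<lambda>j. f n j) UNIV) UNIV = infsum (\<lambda>j. infsum (\<lambda>n. f n j) UNIV) UNIV"
    by (rule infsum_swap_banach[OF F])
  also have "(\<lambda>j. infsum (\<lambda>n. f n j) UNIV) = (\<lambda>j. \<Sum>n. f n j)"
    using cj by (intro ext infsum_nat_eq) 
  also have "(\<lambda>n. infsum (\<lambda>j. f n j) UNIV) = (\<lambda>n. \<Sum>j. f n j)"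
    using inn by (intro ext infsum_nat_eq) 
  also have "infsum (\<lambda>n. \<Sum>j. f n j) UNIV = (\<Sum>n. \<Sum>j. f n j)"
  proof (rule infsum_nat_eq, rule summable_comparison_test'[OF out, where N=0])
    show "norm \<bar>\<Sum>j. f n j\<bar> \<le> (\<Sum>j. \<bar>f n j\<bar>)" for n using summable_rabs[OF inn] by simp
  qed
  also have "infsum (\<lambda>j. \<Sum>n. f n j) UNIV = (\<Sum>j. \<Sum>n. f n j)"
  proof (rule infsum_nat_eq, rule summable_comparison_test'[OF sj, where N=0])
    show "norm \<bar>\<Sum>n. f n j\<bar> \<le> (\<Sum>n. \<bar>f n j\<bar>)" for j using summable_rabs[OF cj] by simp
  qed
  finally show "(\<Sum>j. \<Sum>n. f n j) = (\<Sum>n. \<Sum>j. f n j)" by simp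
qed




fun gseq :: "(nat \<Rightarrow> nat \<Rightarrow> real) \<Rightarrow> nat \<Rightarrow> nat \<Rightarrow> real" where
  "gseq d 0 = canon_basis 0"
| "gseq d (Suc n) = (\<lambda>k. if k = 0 then 0 else - (\<Sum>j. gseq d n j * d k j))"

lemma abs_le_sq: "(a::real)\<^sup>2 \<le> b\<^sup>2 \<Longrightarrow> 0 \<le> b \<Longrightarrow> \<bar>a\<bar> \<le> b"
  using power2_le_imp_le[of "\<bar>a\<bar>" b] by simp

lemma ell2_abs: "ell2 x \<Longrightarrow> ell2 (\<lambda>j. \<bar>x j\<bar>)"
  unfolding ell2_def by simp

lemma basis_sq: "(\<Sum>j. (canon_basis k j)\<^sup>2) = 1"
  unfolding canon_basis_def by (subst suminf_finite[of "{k}"]) auto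

locale dsetup =
  fixes d :: "nat \<Rightarrow> nat \<Rightarrow> real"
  assumes dl2: "\<And>k. ell2 (d k)"
    and Ds: "summable (\<lambda>k. \<Sum>j. (d k j)\<^sup>2)"
    and Db: "(\<Sum>k. \<Sum>j. (d k j)\<^sup>2) \<le> 1/8"
begin

abbreviation "g \<equiv> gseq d"

lemma D_nonneg: "0 \<le> (\<Sum>j. (d k j)\<^sup>2)"
  using dl2 ell2_sq_nonneg by blast

lemma g_bound: "ell2 (g n) \<and> (\<Sum>j. (g n j)\<^sup>2) \<le> (1/8)^n"
proof (induction n)
  case 0
  then show ?case by (simp add: ell2_basis basis_sq)
next
  case (Suc n)
  define G where "G = (\<Sum>j. (g n j)\<^sup>2)"
  have G0: "0 \<le> G" unfolding G_def using Suc ell2_sq_nonneg by blast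
  have pt: "(g (Suc n) k)\<^sup>2 \<le> G * (\<Sum>j. (d k j)\<^sup>2)" for k
  proof (cases "k = 0")
    case True
    then show ?thesis using G0 D_nonneg by simp
  next
    case False
    then have "(g (Suc n) k)\<^sup>2 = (\<Sum>j. g n j * d k j)\<^sup>2" by simp
    also have "\<dots> \<le> G * (\<Sum>j. (d k j)\<^sup>2)" unfolding G_def
      using Suc dl2 by (intro ell2_CS) auto
    finally show ?thesis .
  qed
  have sG: "summable (\<lambda>k. G * (\<Sum>j. (d k j)\<^sup>2))" using Ds by (rule summable_mult)
  have sm: "summable (\<lambda>k. (g (Suc n) k)\<^sup>2)"
    by (rule summable_comparison_test'[OF sG, where N=0]) (use pt in simp)
  have "(\<Sum>k. (g (Suc n) k)\<^sup>2) \<le> (\<Sum>k. G * (\<Sum>j. (d k j)\<^sup>2))"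
    by (rule suminf_le[OF pt sm sG])
  also have "\<dots> = G * (\<Sum>k. \<Sum>j. (d k j)\<^sup>2)" using Ds by (rule suminf_mult)
  also have "\<dots> \<le> (1/8)^n * (1/8)"
    using Suc G0 Db suminf_nonneg[OF Ds D_nonneg] by (intro mult_mono) (auto simp: G_def)
  finally show ?case using sm unfolding ell2_def by simp
qed

lemma g_l2: "ell2 (g n)" using g_bound by blast

lemma g_pt: "\<bar>g n j\<bar> \<le> (1/2)^n"
proof (rule abs_le_sq)
  have "(g n j)\<^sup>2 = sum (\<lambda>j. (g n j)\<^sup>2) {j}" by simp
  also have "\<dots> \<le> (\<Sum>j. (g n j)\<^sup>2)"
    using g_l2[of n] unfolding ell2_def by (intro sum_le_suminf) auto
  also have "\<dots> \<le> (1/8)^n" using g_bound by blast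
  also have "\<dots> \<le> (1/4)^n" by (intro power_mono) auto
  also have "\<dots> = ((1/2)^n)\<^sup>2" by (simp add: power_mult_distrib[symmetric] power2_eq_square power_mult[symmetric] mult.commute) 
  finally show "(g n j)\<^sup>2 \<le> ((1/2)^n)\<^sup>2" .
qed simp

lemma g_abs_summable: "summable (\<lambda>n. \<bar>g n j\<bar>)"
  by (rule summable_comparison_test'[where g="\<lambda>n. (1/2)^n" and N=0]) (use g_pt in auto)

lemma g_summable: "summable (\<lambda>n. g n j)"
  by (rule summable_rabs_cancel[OF g_abs_summable])

definition v :: "nat \<Rightarrow> real" where "v j = (\<Sum>n. g n j)"

lemma v0: "v 0 = 1"
proof -
  have "(\<Sum>n. g (Suc n) 0) = v 0 - g 0 0" unfolding v_def
    using g_summable by (rule suminf_split_head)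
  moreover have "(\<Sum>n. g (Suc n) 0) = 0" by simp
  ultimately show ?thesis by (simp add: canon_basis_def)
qed

lemma v_l2: "ell2 v"
proof -
  define f where "f n j = 4^n * (g n j)\<^sup>2" for n j
  have fa: "\<bar>f n j\<bar> = f n j" for n j unfolding f_def by simp
  have fa': "(\<lambda>j. \<bar>f n j\<bar>) = (\<lambda>j. 4^n * (g n j)\<^sup>2)" for n by (simp add: f_def)
  have inn: "summable (\<lambda>j. \<bar>f n j\<bar>)" for n
    unfolding fa' using g_l2[of n] unfolding ell2_def by (rule summable_mult)
  have out: "summable (\<lambda>n. \<Sum>j. \<bar>f n j\<bar>)"
  proof (rule summable_comparison_test'[where g="\<lambda>n. (1/2)^n" and N=0])
    show "summable (\<lambda>n. (1/2::real)^n)" by simp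
    fix n
    have "(\<Sum>j. \<bar>f n j\<bar>) = 4^n * (\<Sum>j. (g n j)\<^sup>2)"
      unfolding fa' using g_l2[of n] unfolding ell2_def by (rule suminf_mult)
    also have "\<dots> \<le> 4^n * (1/8)^n" using g_bound by (intro mult_left_mono) auto
    also have "\<dots> = (1/2)^n" by (simp add: power_mult_distrib[symmetric])
    finally have "(\<Sum>j. \<bar>f n j\<bar>) \<le> (1/2)^n" .
    moreover have "0 \<le> (\<Sum>j. \<bar>f n j\<bar>)" using inn by (rule suminf_nonneg) auto
    ultimately show "norm (\<Sum>j. \<bar>f n j\<bar>) \<le> (1/2)^n" by simp
  qed
  note sw = double_swap[OF inn out]
  have pt: "(v j)\<^sup>2 \<le> 2 * (\<Sum>n. \<bar>f n j\<bar>)" for j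
  proof -
    have L: "(\<lambda>N. (\<Sum>n<N. g n j)\<^sup>2) \<longlonglongrightarrow> (v j)\<^sup>2"
      unfolding v_def by (intro tendsto_power summable_LIMSEQ g_summable)
    show ?thesis
    proof (rule LIMSEQ_le_const2[OF L], intro exI allI impI)
      fix N :: nat
      have e1: "(1/2::real)^n * (2^n * x) = x" for n x
        by (simp add: power_mult_distrib[symmetric])
      have e2: "((1/2::real)^n)\<^sup>2 = (1/4)^n" for n
        by (simp add: power2_eq_square power_mult_distrib[symmetric])
      have e3: "((2::real)^n * x)\<^sup>2 = f' n x" if "f' = (\<lambda>n x. 4^n * x\<^sup>2)" for n x f'
        using that by (simp add: power2_eq_square power_mult_distrib[symmetric] algebra_simps)
      have "(\<Sum>n<N. g n j)\<^sup>2 = (\<Sum>n<N. (1/2)^n * (2^n * g n j))\<^sup>2" by (simp add: e1)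
      also have "\<dots> \<le> (\<Sum>n<N. ((1/2)^n)\<^sup>2) * (\<Sum>n<N. (2^n * g n j)\<^sup>2)"
        by (rule Cauchy_Schwarz_ineq_sum)
      also have "(\<Sum>n<N. (2^n * g n j)\<^sup>2) = (\<Sum>n<N. \<bar>f n j\<bar>)"
        by (intro sum.cong refl) (simp add: fa f_def e3[OF refl])
      also have "(\<Sum>n<N. ((1/2::real)^n)\<^sup>2) = (\<Sum>n<N. (1/4)^n)" by (simp add: e2)
      also have "(\<Sum>n<N. (1/4::real)^n) * (\<Sum>n<N. \<bar>f n j\<bar>) \<le> 2 * (\<Sum>n. \<bar>f n j\<bar>)"
      proof (rule mult_mono)
        have "(\<Sum>n<N. (1/4::real)^n) \<le> (\<Sum>n. (1/4)^n)"
          by (intro sum_le_suminf) auto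
        also have "\<dots> = 4/3" by (subst suminf_geometric) auto
        finally show "(\<Sum>n<N. (1/4::real)^n) \<le> 2" by simp
        show "(\<Sum>n<N. \<bar>f n j\<bar>) \<le> (\<Sum>n. \<bar>f n j\<bar>)"
          using sw(1) by (intro sum_le_suminf) auto
        show "0 \<le> (2::real)" by simp
        show "0 \<le> (\<Sum>n<N. \<bar>f n j\<bar>)" by (intro sum_nonneg) auto
      qed
      finally show "(\<Sum>n<N. g n j)\<^sup>2 \<le> 2 * (\<Sum>n. \<bar>f n j\<bar>)" .
    qed
  qed
  have "summable (\<lambda>j. 2 * (\<Sum>n. \<bar>f n j\<bar>))" using sw(2) by (rule summable_mult)
  then show ?thesis unfolding ell2_def
    by (rule summable_comparison_test'[where N=0]) (use pt in simp)
qed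

lemma v_orth:
  assumes k: "k \<noteq> 0"
  shows "(\<Sum>j. v j * (canon_basis k j + d k j)) = 0"
proof -
  have s1: "summable (\<lambda>j. v j * canon_basis k j)" by (intro ell2_prod_summable v_l2 ell2_basis)
  have s2: "summable (\<lambda>j. v j * d k j)" by (intro ell2_prod_summable v_l2 dl2)
  have "(\<Sum>j. v j * (canon_basis k j + d k j)) = (\<Sum>j. v j * canon_basis k j + v j * d k j)"
    by (simp add: algebra_simps)
  also have "\<dots> = (\<Sum>j. v j * canon_basis k j) + (\<Sum>j. v j * d k j)"
    using s1 s2 by (rule suminf_add[symmetric])
  also have "(\<Sum>j. v j * canon_basis k j) = v k"
    using inner_basis[of v k] unfolding ell2_inner_def .
  also have "(\<Sum>j. v j * d k j) = (\<Sum>j. \<Sum>n. g n j * d k j)"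
    unfolding v_def using g_summable by (intro suminf_cong suminf_mult2)
  also have "\<dots> = (\<Sum>n. \<Sum>j. g n j * d k j)"
  proof (rule double_swap(3))
    show "summable (\<lambda>j. \<bar>g n j * d k j\<bar>)" for n by (intro ell2_abs_prod_summable g_l2 dl2)
    define c where "c = 1 + (\<Sum>j. (d k j)\<^sup>2)"
    have c1: "1 \<le> c" unfolding c_def using D_nonneg by simp
    show "summable (\<lambda>n. \<Sum>j. \<bar>g n j * d k j\<bar>)"
    proof (rule summable_comparison_test'[where g="\<lambda>n. (1/2)^n * c" and N=0])
      show "summable (\<lambda>n. (1/2::real)^n * c)" by (intro summable_mult2) simp
      fix n
      have sp: "summable (\<lambda>j. \<bar>g n j * d k j\<bar>)" by (intro ell2_abs_prod_summable g_l2 dl2)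
      have "(\<Sum>j. \<bar>g n j * d k j\<bar>)\<^sup>2 = (\<Sum>j. \<bar>g n j\<bar> * \<bar>d k j\<bar>)\<^sup>2" by (simp add: abs_mult)
      also have "\<dots> \<le> (\<Sum>j. (\<bar>g n j\<bar>)\<^sup>2) * (\<Sum>j. (\<bar>d k j\<bar>)\<^sup>2)"
        by (intro ell2_CS ell2_abs g_l2 dl2)
      also have "\<dots> = (\<Sum>j. (g n j)\<^sup>2) * (\<Sum>j. (d k j)\<^sup>2)" by simp
      also have "\<dots> \<le> (1/4)^n * c\<^sup>2"
      proof (rule mult_mono)
        have "(\<Sum>j. (g n j)\<^sup>2) \<le> (1/8)^n" using g_bound by blast
        also have "\<dots> \<le> (1/4)^n" by (intro power_mono) auto
        finally show "(\<Sum>j. (g n j)\<^sup>2) \<le> (1/4)^n" .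
        have "(\<Sum>j. (d k j)\<^sup>2) \<le> c" unfolding c_def by simp
        also have "c \<le> c\<^sup>2" using c1 by (simp add: power2_eq_square)
        finally show "(\<Sum>j. (d k j)\<^sup>2) \<le> c\<^sup>2" .
      qed (auto intro: D_nonneg)
      also have "\<dots> = ((1/2)^n * c)\<^sup>2"
        by (simp add: power2_eq_square power_mult_distrib[symmetric] algebra_simps)
      finally have "\<bar>\<Sum>j. \<bar>g n j * d k j\<bar>\<bar> \<le> (1/2)^n * c"
        by (rule abs_le_sq) (use c1 in simp)
      then show "norm (\<Sum>j. \<bar>g n j * d k j\<bar>) \<le> (1/2)^n * c" by simp
    qed
  qed
  also have "\<dots> = (\<Sum>n. - g (Suc n) k)" using k by simp
  also have "\<dots> = - (\<Sum>n. g (Suc n) k)"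
    using g_summable by (intro suminf_minus summable_ignore_initial_segment[where k=1, simplified])
  also have "(\<Sum>n. g (Suc n) k) = v k - g 0 k" unfolding v_def using g_summable by (rule suminf_split_head)
  finally show ?thesis using k by (simp add: canon_basis_def)
qed

end



lemma sq2: "((a::real)*p + b*q)\<^sup>2 \<le> 2*a\<^sup>2*p\<^sup>2 + 2*b\<^sup>2*q\<^sup>2"
proof -
  have e: "(a*p + b*q)\<^sup>2 + (a*p - b*q)\<^sup>2 = 2*a\<^sup>2*p\<^sup>2 + 2*b\<^sup>2*q\<^sup>2"
    by (simp add: power2_eq_square algebra_simps)
  have "0 \<le> (a*p - b*q)\<^sup>2" by simp
  then show ?thesis using e by linarith
qed

lemma inner_self: "ell2_inner u u = (\<Sum>j. (u j)\<^sup>2)"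
  unfolding ell2_inner_def by (simp add: power2_eq_square)

lemma rank2_HS:
  assumes u: "ell2 u" and v: "ell2 v"
  defines "T \<equiv> (\<lambda>y. (\<lambda>j. ell2_inner u y * v j + ell2_inner v y * u j))"
  shows "HS_selfadjoint T"
proof -
  define U where "U = (\<Sum>j. (u j)\<^sup>2)"
  define V where "V = (\<Sum>j. (v j)\<^sup>2)"
  have U0: "0 \<le> U" "0 \<le> V" unfolding U_def V_def using u v ell2_sq_nonneg by auto
  have Tl2: "ell2 (T y)" for y unfolding T_def using v u by (rule ell2_lin)
  have lin: "T (\<lambda>k. a * x k + b * y k) = (\<lambda>k. a * T x k + b * T y k)"
    if "ell2 x" "ell2 y" for x y a b
    unfolding T_def using that u v
    by (simp add: inner_lin_right algebra_simps)
  have bnd: "ell2_norm (T x) \<le> (2 * sqrt (U*V)) * ell2_norm x" if x: "ell2 x" for x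
  proof -
    define S where "S = (\<Sum>j. (x j)\<^sup>2)"
    define \<alpha> where "\<alpha> = ell2_inner u x"
    define \<beta> where "\<beta> = ell2_inner v x"
    have a2: "\<alpha>\<^sup>2 \<le> U * S" unfolding \<alpha>_def U_def S_def ell2_inner_def using u x by (rule ell2_CS)
    have b2: "\<beta>\<^sup>2 \<le> V * S" unfolding \<beta>_def V_def S_def ell2_inner_def using v x by (rule ell2_CS)
    have S0: "0 \<le> S" unfolding S_def using x ell2_sq_nonneg by auto
    have sR: "summable (\<lambda>j. 2*\<alpha>\<^sup>2*(v j)\<^sup>2 + 2*\<beta>\<^sup>2*(u j)\<^sup>2)"
      using u v unfolding ell2_def by (intro summable_add summable_mult)
    have "(\<Sum>j. (T x j)\<^sup>2) \<le> (\<Sum>j. 2*\<alpha>\<^sup>2*(v j)\<^sup>2 + 2*\<beta>\<^sup>2*(u j)\<^sup>2)"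
    proof (rule suminf_le)
      show "(T x j)\<^sup>2 \<le> 2*\<alpha>\<^sup>2*(v j)\<^sup>2 + 2*\<beta>\<^sup>2*(u j)\<^sup>2" for j
        unfolding T_def \<alpha>_def \<beta>_def by (rule sq2)
      show "summable (\<lambda>j. (T x j)\<^sup>2)" using Tl2 unfolding ell2_def .
    qed (rule sR)
    also have "\<dots> = 2*\<alpha>\<^sup>2*V + 2*\<beta>\<^sup>2*U"
      using u v unfolding ell2_def V_def U_def
      by (subst suminf_add[symmetric]) (auto intro: summable_mult simp: suminf_mult)
    also have "\<dots> \<le> 2*(U*S)*V + 2*(V*S)*U"
      using a2 b2 U0 by (intro add_mono mult_right_mono mult_left_mono) auto
    also have "\<dots> = (2 * sqrt (U*V))\<^sup>2 * S"
      using U0 by (simp add: power_mult_distrib algebra_simps)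
    finally have "sqrt (\<Sum>j. (T x j)\<^sup>2) \<le> sqrt ((2 * sqrt (U*V))\<^sup>2 * S)"
      by (rule real_sqrt_le_mono)
    also have "\<dots> = (2 * sqrt (U*V)) * sqrt S" using U0
      by (simp add: real_sqrt_mult)
    finally show ?thesis unfolding ell2_norm_def S_def .
  qed
  have sa: "ell2_inner (T x) y = ell2_inner x (T y)" if "ell2 x" "ell2 y" for x y
  proof -
    have "ell2_inner (T x) y = ell2_inner y (T x)" by (rule inner_commute)
    also have "\<dots> = ell2_inner u x * ell2_inner y v + ell2_inner v x * ell2_inner y u"
      unfolding T_def using that u v by (intro inner_lin_right)
    also have "ell2_inner x (T y) = ell2_inner u y * ell2_inner x v + ell2_inner v y * ell2_inner x u"
      unfolding T_def using that u v by (intro inner_lin_right)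
    ultimately show ?thesis by (simp add: inner_commute[of _ u] inner_commute[of _ v] algebra_simps)
  qed
  have hs: "summable (\<lambda>k. (ell2_norm (T (canon_basis k)))\<^sup>2)"
  proof (rule summable_comparison_test'[where g="\<lambda>k. 2*(u k)\<^sup>2*V + 2*(v k)\<^sup>2*U" and N=0])
    show "summable (\<lambda>k. 2*(u k)\<^sup>2*V + 2*(v k)\<^sup>2*U)"
      using u v unfolding ell2_def by (intro summable_add summable_mult2 summable_mult)
    fix k
    have Te: "T (canon_basis k) = (\<lambda>j. u k * v j + v k * u j)"
      unfolding T_def inner_basis ..
    have "(ell2_norm (T (canon_basis k)))\<^sup>2 = (\<Sum>j. (u k * v j + v k * u j)\<^sup>2)"
      using Tl2 ell2_norm_sq Te by metis
    also have "\<dots> \<le> (\<Sum>j. 2*(u k)\<^sup>2*(v j)\<^sup>2 + 2*(v k)\<^sup>2*(u j)\<^sup>2)"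
    proof (rule suminf_le)
      show "summable (\<lambda>j. (u k * v j + v k * u j)\<^sup>2)" using Tl2[of "canon_basis k"] Te
        unfolding ell2_def by simp
      show "summable (\<lambda>j. 2*(u k)\<^sup>2*(v j)\<^sup>2 + 2*(v k)\<^sup>2*(u j)\<^sup>2)"
        using u v unfolding ell2_def by (intro summable_add summable_mult)
    qed (rule sq2)
    also have "\<dots> = 2*(u k)\<^sup>2*V + 2*(v k)\<^sup>2*U"
      using u v unfolding ell2_def V_def U_def
      by (subst suminf_add[symmetric]) (auto intro: summable_mult simp: suminf_mult)
    finally show "norm ((ell2_norm (T (canon_basis k)))\<^sup>2) \<le> 2*(u k)\<^sup>2*V + 2*(v k)\<^sup>2*U" by simp
  qed
  show ?thesis
    unfolding HS_selfadjoint_def ell2_bounded_linear_def ell2_selfadjoint_def ell2_hilbert_schmidt_def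
    using Tl2 lin bnd sa hs by blast
qed




theorem mainTheorem16:
  fixes X :: "nat \<Rightarrow> (nat \<Rightarrow> real)"
  assumes "\<forall>k. ell2 (X k)"
    and "summable (\<lambda>k. (ell2_norm (\<lambda>j. canon_basis k j - X k j))\<^sup>2)"
    and "(\<Sum>k. (ell2_norm (\<lambda>j. canon_basis k j - X k j))\<^sup>2) \<le> 1/8"
  shows "\<not> injective_family X"
proof
  assume inj: "injective_family X"
  define d where "d k j = X k j - canon_basis k j" for k j
  have dl2: "ell2 (d k)" for k
    using ell2_lin[OF assms(1)[rule_format, of k] ell2_basis[of k], of 1 "-1"]
    by (simp add: d_def[abs_def])
  have em: "(\<lambda>j. canon_basis k j - X k j) = (\<lambda>j. (-1) * X k j + 1 * canon_basis k j)" for k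
    by auto
  have nd: "(ell2_norm (\<lambda>j. canon_basis k j - X k j))\<^sup>2 = (\<Sum>j. (d k j)\<^sup>2)" for k
  proof -
    have "ell2 (\<lambda>j. canon_basis k j - X k j)"
      unfolding em by (rule ell2_lin[OF assms(1)[rule_format] ell2_basis])
    then have "(ell2_norm (\<lambda>j. canon_basis k j - X k j))\<^sup>2 = (\<Sum>j. (canon_basis k j - X k j)\<^sup>2)"
      by (rule ell2_norm_sq)
    also have "\<dots> = (\<Sum>j. (d k j)\<^sup>2)" unfolding d_def by (simp add: power2_commute)
    finally show ?thesis .
  qed
  interpret dsetup d
    using dl2 assms(2,3) unfolding nd by unfold_locales auto
  have vl2: "ell2 v" by (rule v_l2)
  have Xe: "X k = (\<lambda>j. canon_basis k j + d k j)" for k by (auto simp: d_def)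
  have vorth: "ell2_inner v (X k) = 0" if "k \<noteq> 0" for k
    unfolding ell2_inner_def Xe using v_orth[OF that] .
  define a where "a = X 0 0"
  define b where "b = X 0 1"
  define u where "u = (if a = 0 then canon_basis 0 else (\<lambda>j. b * canon_basis 0 j + (-a) * canon_basis 1 j))"
  have ul2: "ell2 u" unfolding u_def
    using ell2_basis[of 0] ell2_lin[OF ell2_basis ell2_basis, of b 0 "-a" 1] by simp
  have uorth: "ell2_inner u (X 0) = 0"
  proof (cases "a = 0")
    case True
    then show ?thesis unfolding u_def using inner_basis[of "X 0" 0] inner_commute
      by (simp add: a_def)
  next
    case False
    have "ell2_inner u (X 0) = ell2_inner (X 0) u" by (rule inner_commute)
    also have "\<dots> = b * ell2_inner (X 0) (canon_basis 0) + (-a) * ell2_inner (X 0) (canon_basis 1)"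
      unfolding u_def using False
      by (simp only: if_False) (rule inner_lin_right[OF assms(1)[rule_format] ell2_basis ell2_basis])
    also have "\<dots> = b * X 0 0 + (-a) * X 0 1" by (simp only: inner_basis)
    finally show ?thesis by (simp add: a_def b_def)
  qed
  obtain i where ui: "u i \<noteq> 0"
  proof (cases "a = 0")
    case True then show ?thesis using that[of 0] by (simp add: u_def canon_basis_def)
  next
    case False then show ?thesis using that[of 1] by (simp add: u_def canon_basis_def)
  qed
  define U where "U = ell2_inner u u"
  have Upos: "0 < U"
  proof -
    have "(u i)\<^sup>2 = sum (\<lambda>j. (u j)\<^sup>2) {i}" by simp
    also have "\<dots> \<le> (\<Sum>j. (u j)\<^sup>2)" using ul2 unfolding ell2_def by (intro sum_le_suminf) auto
    finally have "(u i)\<^sup>2 \<le> (\<Sum>j. (u j)\<^sup>2)" .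
    moreover have "0 < (u i)\<^sup>2" using ui by simp
    ultimately show ?thesis unfolding U_def inner_self by linarith
  qed
  define T where "T = (\<lambda>y. (\<lambda>j. ell2_inner u y * v j + ell2_inner v y * u j))"
  have HS: "HS_selfadjoint T" unfolding T_def by (rule rank2_HS[OF ul2 vl2])
  have q: "ell2_inner (T (X k)) (X k) = 0" for k
  proof -
    have "ell2_inner (T (X k)) (X k) = ell2_inner (X k) (T (X k))" by (rule inner_commute)
    also have "\<dots> = ell2_inner u (X k) * ell2_inner (X k) v + ell2_inner v (X k) * ell2_inner (X k) u"
      unfolding T_def using assms(1) ul2 vl2 by (intro inner_lin_right) auto
    also have "\<dots> = 0"
    proof (cases "k = 0")
      case True then show ?thesis using uorth inner_commute[of "X 0" u] by simp
    next
      case False then show ?thesis using vorth[OF False] inner_commute[of "X k" v] by simp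
    qed
    finally show ?thesis .
  qed
  have Tu: "T u = (\<lambda>_. 0)"
    using inj HS q ul2 unfolding injective_family_def by blast
  have "ell2_inner u (T u) = U * ell2_inner u v + ell2_inner v u * U"
    unfolding T_def U_def using ul2 vl2 by (intro inner_lin_right)
  moreover have "ell2_inner u (T u) = 0" unfolding Tu ell2_inner_def by simp
  ultimately have "ell2_inner v u = 0" using Upos inner_commute[of u v] by simp
  then have "T u 0 = U" unfolding T_def U_def using v0 by simp
  then show False using Tu Upos by simp
qed


end
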